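(* Let $w$ be a nonnegative weight function on $\mathbb R$ and let $w_1(t)=(1+t^2)w(t)$. Consider the inner product on $\mathbb R[x,y]/\langle x^2-y^2-1\rangle$ over both branches of the hyperbola $x^2-y^2=1$: $$\langle f,g\rangle=\int_{-\infty}^{\infty}\Big[f(\sqrt{y^2+1},y)g(\sqrt{y^2+1},y)+f(-\sqrt{y^2+1},y)g(-\sqrt{y^2+1},y)\Big]w(y)\,dy .$$ For $n\ge1$, the polynomials $$Y_{n,1}(x,y)=p_n(w;y),\qquad Y_{n,2}(x,y)=x\,p_{n-1}(w_1;y)$$ form an orthogonal basis of $\mathcal H_n(\varpi)$, and $$\langle Y_{n,1},Y_{n,1}\rangle=2h_n(w),\qquad \langle Y_{n,2},Y_{n,2}\rangle=2h_{n-1}(w_1).$$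
   Context: For a nonnegative weight $v$ (finite moments, infinite support), $p_n(v;\cdot)$ denotes an orthogonal polynomial of degree $n$ with respect to $v$ (any fixed nonzero normalization) and $h_n(v)=\int p_n(v;t)^2v(t)\,dt$. $\mathcal H_n(\varpi)$ is the space of polynomials $P$ of degree $n$ in two variables with $\langle P,Q\rangle=0$ for all polynomials $Q$ of degree $<n$ and $\langle P,P\rangle>0$, considered modulo the ideal $\langle x^2-y^2-1\rangle$; it has dimension 2 for $n\ge1$. *)

theory Defs
  imports "HOL-Analysis.Analysis" "HOL-Computational_Algebra.Polynomial"
begin

(* Nonnegative weight on R: measurable, all moments finite, infinite support
   (for an absolutely continuous measure w(t)dt this means {w>0} has positive measure). *)
definition weight :: "(real \<Rightarrow> real) \<Rightarrow> bool" where
  "weight v \<longleftrightarrow> (\<forall>t. 0 \<le> v t) \<and> v \<in> borel_measurable borel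
     \<and> (\<forall>k::nat. integrable lborel (\<lambda>t. t ^ k * v t))
     \<and> emeasure lborel {t. 0 < v t} > 0"

(* p is an orthogonal polynomial of degree n w.r.t. v (any nonzero normalization) *)
definition orth_poly :: "(real \<Rightarrow> real) \<Rightarrow> nat \<Rightarrow> real poly \<Rightarrow> bool" where
  "orth_poly v n p \<longleftrightarrow> p \<noteq> 0 \<and> degree p = n \<and>
     (\<forall>q. degree q < n \<longrightarrow> (LINT t|lborel. poly p t * poly q t * v t) = 0)"

definition hnorm :: "(real \<Rightarrow> real) \<Rightarrow> real poly \<Rightarrow> real" where
  "hnorm v p = (LINT t|lborel. (poly p t)\<^sup>2 * v t)"

(* Bivariate polynomials: P :: real poly poly represents sum_i x^i * (coeff P i)(y) *)
definition eval2 :: "real poly poly \<Rightarrow> real \<Rightarrow> real \<Rightarrow> real" where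
  "eval2 P x y = poly (map_poly (\<lambda>c. poly c y) P) x"

definition tdeg :: "real poly poly \<Rightarrow> nat" where
  "tdeg P = (if P = 0 then 0 else Max {i + degree (coeff P i) | i. coeff P i \<noteq> 0})"

definition hyp_ip :: "(real \<Rightarrow> real) \<Rightarrow> real poly poly \<Rightarrow> real poly poly \<Rightarrow> real" where
  "hyp_ip w f g = (LINT y|lborel.
      (eval2 f (sqrt (y\<^sup>2 + 1)) y * eval2 g (sqrt (y\<^sup>2 + 1)) y
     + eval2 f (- sqrt (y\<^sup>2 + 1)) y * eval2 g (- sqrt (y\<^sup>2 + 1)) y) * w y)"

(* x^2 - y^2 - 1 *)
definition hyp_gen :: "real poly poly" where
  "hyp_gen = [: [:-1, 0, -1:], 0, 1 :]"

definition in_hyp_ideal :: "real poly poly \<Rightarrow> bool" where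
  "in_hyp_ideal P \<longleftrightarrow> (\<exists>Q. P = hyp_gen * Q)"

definition H_space :: "(real \<Rightarrow> real) \<Rightarrow> nat \<Rightarrow> real poly poly set" where
  "H_space w n = {P. tdeg P = n \<and> (\<forall>Q. tdeg Q < n \<longrightarrow> hyp_ip w P Q = 0) \<and> hyp_ip w P P > 0}"

end

theory Submission
  imports Defs
begin

lemma eval2_pCons: "eval2 (pCons a P) x y = poly a y + x * eval2 P x y"
  by (simp add: eval2_def map_poly_pCons)

lemma eval2_0[simp]: "eval2 0 x y = 0" by (simp add: eval2_def)

lemma eval2_add: "eval2 (P + Q) x y = eval2 P x y + eval2 Q x y"
  by (induction P Q rule: poly_induct2) (simp_all add: eval2_pCons algebra_simps)

lemma eval2_smult: "eval2 (smult a Q) x y = poly a y * eval2 Q x y"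
  by (induction Q) (simp_all add: eval2_pCons algebra_simps)

lemma eval2_mult: "eval2 (P * Q) x y = eval2 P x y * eval2 Q x y"
  by (induction P) (simp_all add: eval2_pCons eval2_add eval2_smult algebra_simps)

lemma eval2_hyp_gen: "x^2 = y^2 + 1 \<Longrightarrow> eval2 hyp_gen x y = 0"
  by (simp add: hyp_gen_def eval2_pCons power2_eq_square algebra_simps)

lemma eval2_pair: "eval2 [:A, B:] x y = poly A y + x * poly B y"
  by (simp add: eval2_pCons)

definition bnd :: "real poly poly \<Rightarrow> nat \<Rightarrow> bool" where
  "bnd P d \<longleftrightarrow> (\<forall>i. coeff P i \<noteq> 0 \<longrightarrow> i + degree (coeff P i) \<le> d)"

lemma bnd_add: "bnd P d \<Longrightarrow> bnd Q d \<Longrightarrow> bnd (P + Q) d"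
  unfolding bnd_def
proof (intro allI impI)
  fix i assume a: "\<forall>i. coeff P i \<noteq> 0 \<longrightarrow> i + degree (coeff P i) \<le> d"
    "\<forall>i. coeff Q i \<noteq> 0 \<longrightarrow> i + degree (coeff Q i) \<le> d" and nz: "coeff (P + Q) i \<noteq> 0"
  have "degree (coeff P i + coeff Q i) \<le> max (degree (coeff P i)) (degree (coeff Q i))"
    by (rule degree_add_le_max)
  moreover have "coeff P i \<noteq> 0 \<Longrightarrow> i + degree (coeff P i) \<le> d" using a by blast
  moreover have "coeff Q i \<noteq> 0 \<Longrightarrow> i + degree (coeff Q i) \<le> d" using a by blast
  ultimately show "i + degree (coeff (P + Q) i) \<le> d" using nz
    by (cases "coeff P i = 0"; cases "coeff Q i = 0") (auto simp: max_def split: if_splits)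
qed

lemma reduce:
  "bnd P d \<Longrightarrow> \<exists>Q A B. P = hyp_gen * Q + [:A, B:] \<and> bnd [:A, B:] d"
proof (induction "degree P" arbitrary: P rule: less_induct)
  case less
  obtain a P1 where P1: "P = pCons a P1" by (metis pCons_cases)
  obtain b R where R: "P1 = pCons b R" by (metis pCons_cases)
  show ?case
  proof (cases "R = 0")
    case True
    then show ?thesis using less.prems P1 R by (intro exI[of _ 0] exI[of _ a] exI[of _ b]) auto
  next
    case False
    define c :: "real poly poly" where "c = [:[:1,0,1:]:]"
    have dP: "degree P = Suc (Suc (degree R))" using False P1 R by simp
    have dc: "degree (c * R) = degree R" unfolding c_def by (simp add: degree_mult_eq)
    have cR: "coeff (c * R) i = [:1,0,1:] * coeff R i" for i unfolding c_def by simp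
    have cP: "coeff P (Suc (Suc i)) = coeff R i" for i using P1 R by simp
    have bR: "bnd (c * R) d" unfolding bnd_def
    proof (intro allI impI)
      fix i assume h: "coeff (c * R) i \<noteq> 0"
      then have nz: "coeff R i \<noteq> 0" using cR by auto
      have le: "Suc (Suc i) + degree (coeff P (Suc (Suc i))) \<le> d"
        using less.prems nz cP unfolding bnd_def by metis
      have d2: "degree [:1,0,1::real:] = 2" by simp
      have nz2: "[:1,0,1::real:] \<noteq> 0" by simp
      have dd: "degree ([:1,0,1:] * coeff R i) = 2 + degree (coeff R i)"
        using degree_mult_eq[OF nz2 nz] d2 by metis
      have "degree (coeff (c * R) i) = 2 + degree (coeff R i)"
        unfolding cR by (rule dd)
      then show "i + degree (coeff (c * R) i) \<le> d" using le unfolding cP by linarith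
    qed
    from less.hyps[of "c * R"] dc dP bR obtain Q A B where
      QAB: "c * R = hyp_gen * Q + [:A, B:]" "bnd [:A, B:] d" by auto
    have bab: "bnd [:a, b:] d" unfolding bnd_def
    proof (intro allI impI)
      fix i assume h: "coeff [:a, b:] i \<noteq> 0"
      have "coeff [:a, b:] i = coeff P i" using P1 R h
        by (cases i; cases "i - 1") auto
      then show "i + degree (coeff [:a, b:] i) \<le> d" using less.prems h unfolding bnd_def by metis
    qed
    have hc: "hyp_gen + c = [:0, 0, 1:]" by (simp add: hyp_gen_def c_def)
    have e1: "pCons 0 (pCons 0 R) = (hyp_gen + c) * R" unfolding hc by simp
    have "P = [:a, b:] + pCons 0 (pCons 0 R)" using P1 R by simp
    also have "\<dots> = [:a, b:] + (hyp_gen * R + c * R)" unfolding e1 by (simp only: distrib_right)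
    also have "\<dots> = hyp_gen * (R + Q) + ([:a, b:] + [:A, B:])"
      unfolding QAB(1) by (simp only: distrib_left add_ac)
    finally have "P = hyp_gen * (R + Q) + ([:a, b:] + [:A, B:])" .
    moreover have "[:a, b:] + [:A, B:] = [:a + A, b + B:]" by simp
    ultimately show ?thesis using bnd_add[OF bab QAB(2)] by metis
  qed
qed


definition good :: "(real \<Rightarrow> real) \<Rightarrow> bool" where
  "good v \<longleftrightarrow> (\<forall>t. 0 \<le> v t) \<and> v \<in> borel_measurable borel
     \<and> (\<forall>r. integrable lborel (\<lambda>t. poly r t * v t)) \<and> emeasure lborel {t. 0 < v t} > 0"

lemma weight_good: assumes "weight w" shows "good w"
proof -
  have "integrable lborel (\<lambda>t. poly r t * w t)" for r
  proof -
    have "integrable lborel (\<lambda>t. \<Sum>i\<le>degree r. coeff r i * (t ^ i * w t))"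
      using assms unfolding weight_def
      by (intro Bochner_Integration.integrable_sum Bochner_Integration.integrable_mult_right) auto
    moreover have "(\<lambda>t. \<Sum>i\<le>degree r. coeff r i * (t ^ i * w t)) = (\<lambda>t. poly r t * w t)"
      by (auto simp: poly_altdef sum_distrib_right mult.assoc)
    ultimately show ?thesis by simp
  qed
  then show ?thesis using assms unfolding weight_def good_def by auto
qed

lemma good_w1: assumes "good w" shows "good (\<lambda>t. (1 + t\<^sup>2) * w t)"
proof -
  have "integrable lborel (\<lambda>t. poly r t * ((1 + t\<^sup>2) * w t))" for r
  proof -
    have "integrable lborel (\<lambda>t. poly (r * [:1,0,1:]) t * w t)" using assms unfolding good_def by blast
    moreover have "(\<lambda>t. poly (r * [:1,0,1:]) t * w t) = (\<lambda>t. poly r t * ((1 + t\<^sup>2) * w t))"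
      by (auto simp: algebra_simps power2_eq_square)
    ultimately show ?thesis by simp
  qed
  moreover have "{t. 0 < (1 + t\<^sup>2) * w t} = {t. 0 < w t}"
  proof -
    have "0 < 1 + t\<^sup>2" for t :: real by (simp add: add_pos_nonneg)
    then show ?thesis by (auto simp: zero_less_mult_iff) (meson less_asym)
  qed
  moreover have wm[measurable]: "w \<in> borel_measurable borel" using assms unfolding good_def by auto
  moreover have "(\<lambda>t. (1 + t\<^sup>2) * w t) \<in> borel_measurable borel" by measurable
  moreover have "\<forall>t. 0 \<le> (1 + t\<^sup>2) * w t" using assms unfolding good_def by auto
  ultimately show ?thesis using assms unfolding good_def by auto
qed

lemma good_int2: "good v \<Longrightarrow> integrable lborel (\<lambda>t. poly A t * poly B t * v t)"
proof -
  assume "good v"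
  then have "integrable lborel (\<lambda>t. poly (A * B) t * v t)" unfolding good_def by blast
  moreover have "(\<lambda>t. poly (A * B) t * v t) = (\<lambda>t. poly A t * poly B t * v t)" by simp
  ultimately show ?thesis by simp
qed

lemma good_pos:
  assumes g: "good v" and r: "r \<noteq> 0"
  shows "(LINT t|lborel. poly r t * poly r t * v t) > 0"
proof -
  have int: "integrable lborel (\<lambda>t. poly r t * poly r t * v t)" using good_int2[OF g] .
  have nn: "\<And>t. 0 \<le> poly r t * poly r t * v t" using g unfolding good_def by auto
  have ge: "(LINT t|lborel. poly r t * poly r t * v t) \<ge> 0" using nn by (intro integral_nonneg_AE AE_I2) (rule nn)
  have pm[measurable]: "poly r \<in> borel_measurable borel"
    by (intro borel_measurable_continuous_onI continuous_intros)
  have vm[measurable]: "v \<in> borel_measurable borel" using g unfolding good_def by auto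
  show ?thesis
  proof (rule ccontr)
    assume "\<not> ?thesis"
    then have "(LINT t|lborel. poly r t * poly r t * v t) = 0" using ge by linarith
    then have ae: "AE t in lborel. poly r t * poly r t * v t = 0"
      using integral_nonneg_eq_0_iff_AE[OF int] nn by auto
    define N where "N = {t. poly r t * poly r t * v t \<noteq> 0}"
    have fm: "(\<lambda>t. poly r t * poly r t * v t) \<in> borel_measurable borel" by measurable
    have "(\<lambda>t. poly r t * poly r t * v t) -` (-{0}) \<inter> space borel \<in> sets borel"
      by (rule measurable_sets[OF fm]) (simp add: open_Compl)
    moreover have "(\<lambda>t. poly r t * poly r t * v t) -` (-{0}) \<inter> space borel = N" unfolding N_def by auto
    ultimately have Nm: "N \<in> sets lborel" by simp
    have N0: "emeasure lborel N = 0"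
      using ae AE_iff_measurable[OF Nm, of "\<lambda>t. poly r t * poly r t * v t = 0"] unfolding N_def by auto
    define Z where "Z = {t. poly r t = 0}"
    have Zf: "finite Z" unfolding Z_def using poly_roots_finite[OF r] .
    have Z0: "emeasure lborel Z = 0" using Zf by (intro emeasure_lborel_countable countable_finite)
    have Zm: "Z \<in> sets lborel" using Zf by (simp add: finite_imp_closed)
    have sub: "{t. 0 < v t} \<subseteq> N \<union> Z" unfolding N_def Z_def by auto
    have "emeasure lborel {t. 0 < v t} \<le> emeasure lborel (N \<union> Z)"
      using sub Nm Zm by (intro emeasure_mono) auto
    also have "\<dots> \<le> emeasure lborel N + emeasure lborel Z" using Nm Zm by (intro emeasure_subadditive)
    finally show False using N0 Z0 g unfolding good_def by auto
  qed
qed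

lemma orth_unique:
  assumes g: "good v" and op: "orth_poly v n p" and dA: "degree A \<le> n"
    and orth: "\<And>r. degree r < n \<Longrightarrow> (LINT t|lborel. poly A t * poly r t * v t) = 0"
  shows "\<exists>a. A = smult a p"
proof -
  have p0: "p \<noteq> 0" and dp: "degree p = n"
    and po: "\<And>r. degree r < n \<Longrightarrow> (LINT t|lborel. poly p t * poly r t * v t) = 0"
    using op unfolding orth_poly_def by auto
  have lc: "coeff p n \<noteq> 0" using p0 dp by (metis leading_coeff_0_iff)
  define a where "a = coeff A n / coeff p n"
  define D where "D = A - smult a p"
  have cD: "coeff D n = 0" unfolding D_def a_def using lc by simp
  have dD: "degree D \<le> n" unfolding D_def using dA dp
    by (metis degree_diff_le degree_smult_le le_trans)
  have "D = 0"
  proof (rule ccontr)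
    assume D0: "D \<noteq> 0"
    have "degree D \<noteq> n" using cD D0 by (metis leading_coeff_0_iff)
    then have dlt: "degree D < n" using dD by simp
    have "(LINT t|lborel. poly D t * poly D t * v t)
        = (LINT t|lborel. poly A t * poly D t * v t - a * (poly p t * poly D t * v t))"
      unfolding D_def by (intro Bochner_Integration.integral_cong) (auto simp: algebra_simps)
    also have "\<dots> = (LINT t|lborel. poly A t * poly D t * v t) - a * (LINT t|lborel. poly p t * poly D t * v t)"
      using good_int2[OF g] by (subst Bochner_Integration.integral_diff) auto
    also have "\<dots> = 0" using orth[OF dlt] po[OF dlt] by simp
    finally show False using good_pos[OF g D0] by simp
  qed
  then show ?thesis unfolding D_def by auto
qed


lemma tdeg_fin: "finite {i + degree (coeff P i) | i. coeff P i \<noteq> 0}"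
proof -
  have "{i + degree (coeff P i) | i. coeff P i \<noteq> 0} \<subseteq> (\<lambda>i. i + degree (coeff P i)) ` {..degree P}"
    using le_degree by fastforce
  then show ?thesis by (rule finite_subset) simp
qed

lemma tdeg_ge: "coeff P i \<noteq> 0 \<Longrightarrow> i + degree (coeff P i) \<le> tdeg P"
proof -
  assume h: "coeff P i \<noteq> 0"
  then have "P \<noteq> 0" by auto
  then show ?thesis unfolding tdeg_def using h tdeg_fin[of P] by (auto intro!: Max_ge)
qed

lemma bnd_tdeg: "bnd P (tdeg P)"
  unfolding bnd_def using tdeg_ge by blast

lemma tdeg_le: "bnd P d \<Longrightarrow> tdeg P \<le> d"
proof -
  assume b: "bnd P d"
  show ?thesis
  proof (cases "P = 0")
    case True then show ?thesis by (simp add: tdeg_def)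
  next
    case False
    then have "coeff P (degree P) \<noteq> 0" by simp
    then have ne: "{i + degree (coeff P i) | i. coeff P i \<noteq> 0} \<noteq> {}" by blast
    show ?thesis using False b ne tdeg_fin[of P] unfolding tdeg_def bnd_def
      by (auto simp: Max_le_iff)
  qed
qed

lemma bnd_const: "degree p \<le> d \<Longrightarrow> bnd [:p:] d"
  unfolding bnd_def by (auto simp: coeff_pCons split: nat.splits)

lemma bnd_x: "Suc (degree q) \<le> d \<Longrightarrow> bnd [:0, q:] d"
  unfolding bnd_def by (auto simp: coeff_pCons split: nat.splits)

lemma bnd_pair:
  assumes "bnd [:A, B:] d"
  shows "degree A \<le> d" and "B \<noteq> 0 \<Longrightarrow> Suc (degree B) \<le> d"
proof -
  show "degree A \<le> d"
  proof (cases "A = 0")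
    case False
    then have "coeff [:A, B:] 0 \<noteq> 0" by simp
    then show ?thesis using assms unfolding bnd_def by fastforce
  qed simp
  assume "B \<noteq> 0"
  then have "coeff [:A, B:] 1 \<noteq> 0" by simp
  then show "Suc (degree B) \<le> d" using assms unfolding bnd_def by fastforce
qed

lemma tdeg_const: "p \<noteq> 0 \<Longrightarrow> tdeg [:p:] = degree p"
proof -
  assume "p \<noteq> 0"
  then have "coeff [:p:] 0 \<noteq> 0" by simp
  from tdeg_ge[OF this] have "degree p \<le> tdeg [:p:]" by simp
  moreover have "tdeg [:p:] \<le> degree p" by (rule tdeg_le[OF bnd_const]) simp
  ultimately show ?thesis by simp
qed

lemma tdeg_x: "q \<noteq> 0 \<Longrightarrow> tdeg [:0, q:] = Suc (degree q)"
proof -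
  assume "q \<noteq> 0"
  then have "coeff [:0, q:] 1 \<noteq> 0" by simp
  from tdeg_ge[OF this] have "Suc (degree q) \<le> tdeg [:0, q:]" by simp
  moreover have "tdeg [:0, q:] \<le> Suc (degree q)" by (rule tdeg_le[OF bnd_x]) simp
  ultimately show ?thesis by simp
qed

lemma eval_red:
  assumes "P = hyp_gen * Q + [:A, B:]" and "x^2 = y^2 + 1"
  shows "eval2 P x y = poly A y + x * poly B y"
  using assms by (simp add: eval2_add eval2_mult eval2_hyp_gen eval2_pair)

lemma hyp_ip_red:
  assumes g: "good w" and P: "P = hyp_gen * Q1 + [:A1, B1:]" and R: "R = hyp_gen * Q2 + [:A2, B2:]"
  shows "hyp_ip w P R = 2 * (LINT t|lborel. poly A1 t * poly A2 t * w t)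
     + 2 * (LINT t|lborel. poly B1 t * poly B2 t * ((1 + t\<^sup>2) * w t))"
proof -
  have pt: "(eval2 P (sqrt (y\<^sup>2 + 1)) y * eval2 R (sqrt (y\<^sup>2 + 1)) y
     + eval2 P (- sqrt (y\<^sup>2 + 1)) y * eval2 R (- sqrt (y\<^sup>2 + 1)) y) * w y
    = 2 * (poly A1 y * poly A2 y * w y) + 2 * (poly B1 y * poly B2 y * ((1 + y\<^sup>2) * w y))" for y
  proof -
    define s where "s = sqrt (y\<^sup>2 + 1)"
    have s2: "s^2 = y\<^sup>2 + 1" unfolding s_def by simp
    have s2': "(-s)^2 = y\<^sup>2 + 1" using s2 by simp
    have ss: "s * s = 1 + y\<^sup>2" using s2 by (simp add: power2_eq_square)
    have "(eval2 P s y * eval2 R s y + eval2 P (-s) y * eval2 R (-s) y) * w y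
      = ((poly A1 y + s * poly B1 y) * (poly A2 y + s * poly B2 y)
        + (poly A1 y + (-s) * poly B1 y) * (poly A2 y + (-s) * poly B2 y)) * w y"
      using eval_red[OF P s2] eval_red[OF R s2] eval_red[OF P s2'] eval_red[OF R s2'] by simp
    also have "\<dots> = 2 * (poly A1 y * poly A2 y * w y) + 2 * (poly B1 y * poly B2 y * ((s * s) * w y))"
      by (simp add: algebra_simps)
    also have "\<dots> = 2 * (poly A1 y * poly A2 y * w y) + 2 * (poly B1 y * poly B2 y * ((1 + y\<^sup>2) * w y))"
      unfolding ss ..
    finally show ?thesis unfolding s_def .
  qed
  have i1: "integrable lborel (\<lambda>t. poly A1 t * poly A2 t * w t)" using good_int2[OF g] .
  have i2: "integrable lborel (\<lambda>t. poly B1 t * poly B2 t * ((1 + t\<^sup>2) * w t))"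
    using good_int2[OF good_w1[OF g]] .
  have "hyp_ip w P R = (LINT y|lborel. 2 * (poly A1 y * poly A2 y * w y)
      + 2 * (poly B1 y * poly B2 y * ((1 + y\<^sup>2) * w y)))"
    unfolding hyp_ip_def pt ..
  also have "\<dots> = 2 * (LINT t|lborel. poly A1 t * poly A2 t * w t)
     + 2 * (LINT t|lborel. poly B1 t * poly B2 t * ((1 + t\<^sup>2) * w t))"
    using i1 i2 by simp
  finally show ?thesis .
qed


theorem theorem5p1:
  fixes w :: "real \<Rightarrow> real" and n :: nat and p q :: "real poly"
  assumes "weight w" and "n \<ge> 1"
    and "orth_poly w n p"
    and "orth_poly (\<lambda>t. (1 + t\<^sup>2) * w t) (n - 1) q"
  shows "[:p:] \<in> H_space w n \<and> [:0, q:] \<in> H_space w n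
    \<and> hyp_ip w [:p:] [:0, q:] = 0
    \<and> (\<forall>a b::real. in_hyp_ideal (smult [:a:] [:p:] + smult [:b:] [:0, q:]) \<longrightarrow> a = 0 \<and> b = 0)
    \<and> (\<forall>P \<in> H_space w n. \<exists>a b::real.
          in_hyp_ideal (P - (smult [:a:] [:p:] + smult [:b:] [:0, q:])))
    \<and> hyp_ip w [:p:] [:p:] = 2 * hnorm w p
    \<and> hyp_ip w [:0, q:] [:0, q:] = 2 * hnorm (\<lambda>t. (1 + t\<^sup>2) * w t) q"
proof -
  define w1 where "w1 = (\<lambda>t. (1 + t\<^sup>2) * w t)"
  have g: "good w" using weight_good[OF assms(1)] .
  have g1: "good w1" unfolding w1_def using good_w1[OF g] .
  have p0: "p \<noteq> 0" and dp: "degree p = n"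
    and po: "\<And>r. degree r < n \<Longrightarrow> (LINT t|lborel. poly p t * poly r t * w t) = 0"
    using assms(3) unfolding orth_poly_def by auto
  have q0: "q \<noteq> 0" and dq: "degree q = n - 1"
    and qo: "\<And>r. degree r < n - 1 \<Longrightarrow> (LINT t|lborel. poly q t * poly r t * w1 t) = 0"
    using assms(4) unfolding orth_poly_def w1_def by auto
  have ep: "[:p:] = hyp_gen * 0 + [:p, 0:]" by simp
  have eq: "[:0, q:] = hyp_gen * 0 + [:0, q:]" by simp
  have ip: "hyp_ip w P R = 2 * (LINT t|lborel. poly A1 t * poly A2 t * w t)
     + 2 * (LINT t|lborel. poly B1 t * poly B2 t * w1 t)"
    if "P = hyp_gen * Q1 + [:A1, B1:]" "R = hyp_gen * Q2 + [:A2, B2:]" for P R Q1 Q2 A1 A2 B1 B2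
    using hyp_ip_red[OF g that] unfolding w1_def .
  have tp: "tdeg [:p:] = n" using tdeg_const[OF p0] dp by simp
  have tq: "tdeg [:0, q:] = n" using tdeg_x[OF q0] dq assms(2) by simp
  have orthp: "hyp_ip w [:p:] Q = 0" and orthq: "hyp_ip w [:0, q:] Q = 0" if tQ: "tdeg Q < n" for Q
  proof -
    obtain Q2 A2 B2 where QR: "Q = hyp_gen * Q2 + [:A2, B2:]" and b: "bnd [:A2, B2:] (tdeg Q)"
      using reduce[OF bnd_tdeg[of Q]] by blast
    have dA: "degree A2 < n" using bnd_pair(1)[OF b] tQ by simp
    show "hyp_ip w [:p:] Q = 0" using ip[OF ep QR] po[OF dA] by simp
    have "(LINT t|lborel. poly q t * poly B2 t * w1 t) = 0"
    proof (cases "B2 = 0")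
      case False
      then have "degree B2 < n - 1" using bnd_pair(2)[OF b] tQ by simp
      then show ?thesis by (rule qo)
    qed simp
    then show "hyp_ip w [:0, q:] Q = 0" using ip[OF eq QR] by simp
  qed
  have np: "hyp_ip w [:p:] [:p:] = 2 * (LINT t|lborel. poly p t * poly p t * w t)"
    using ip[OF ep ep] by simp
  have nq: "hyp_ip w [:0, q:] [:0, q:] = 2 * (LINT t|lborel. poly q t * poly q t * w1 t)"
    using ip[OF eq eq] by simp
  have c1: "[:p:] \<in> H_space w n" unfolding H_space_def
    using tp orthp np good_pos[OF g p0] by auto
  have c2: "[:0, q:] \<in> H_space w n" unfolding H_space_def
    using tq orthq nq good_pos[OF g1 q0] by auto
  have c3: "hyp_ip w [:p:] [:0, q:] = 0" using ip[OF ep eq] by simp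
  have c4: "\<forall>a b::real. in_hyp_ideal (smult [:a:] [:p:] + smult [:b:] [:0, q:]) \<longrightarrow> a = 0 \<and> b = 0"
  proof (intro allI impI)
    fix a b :: real
    assume "in_hyp_ideal (smult [:a:] [:p:] + smult [:b:] [:0, q:])"
    then obtain Q where hQ: "smult [:a:] [:p:] + smult [:b:] [:0, q:] = hyp_gen * Q"
      unfolding in_hyp_ideal_def by blast
    have L: "smult [:a:] [:p:] + smult [:b:] [:0, q:] = [:smult a p, smult b q:]" by simp
    have dL: "degree [:smult a p, smult b q:] \<le> 1" by simp
    have Q0: "Q = 0"
    proof (rule ccontr)
      assume "Q \<noteq> 0"
      moreover have "hyp_gen \<noteq> 0" "degree hyp_gen = 2" by (simp_all add: hyp_gen_def)
      ultimately have "degree (hyp_gen * Q) = 2 + degree Q" by (simp add: degree_mult_eq)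
      then show False using hQ L dL by simp
    qed
    then have "smult a p = 0" "smult b q = 0" using hQ L by simp_all
    then show "a = 0 \<and> b = 0" using p0 q0 by simp
  qed
  have c5: "\<forall>P \<in> H_space w n. \<exists>a b::real.
          in_hyp_ideal (P - (smult [:a:] [:p:] + smult [:b:] [:0, q:]))"
  proof
    fix P assume "P \<in> H_space w n"
    then have tP: "tdeg P = n" and oP: "\<And>Q. tdeg Q < n \<Longrightarrow> hyp_ip w P Q = 0"
      unfolding H_space_def by auto
    obtain Q A B where PR: "P = hyp_gen * Q + [:A, B:]" and b: "bnd [:A, B:] n"
      using reduce[OF bnd_tdeg[of P]] tP by blast
    have oA: "(LINT t|lborel. poly A t * poly r t * w t) = 0" if dr: "degree r < n" for r
    proof -
      have er: "[:r:] = hyp_gen * 0 + [:r, 0:]" by simp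
      have "tdeg [:r:] < n"
      proof (cases "r = 0")
        case True then show ?thesis using assms(2) by (simp add: tdeg_def)
      next
        case False then show ?thesis using tdeg_const[OF False] dr by simp
      qed
      then show ?thesis using oP ip[OF PR er] by simp
    qed
    have oB: "(LINT t|lborel. poly B t * poly r t * w1 t) = 0" if dr: "degree r < n - 1" for r
    proof -
      have er: "[:0, r:] = hyp_gen * 0 + [:0, r:]" by simp
      have "tdeg [:0, r:] < n"
      proof (cases "r = 0")
        case True then show ?thesis using assms(2) by (simp add: tdeg_def)
      next
        case False then show ?thesis using tdeg_x[OF False] dr by simp
      qed
      then show ?thesis using oP ip[OF PR er] by simp
    qed
    have dA: "degree A \<le> n" using bnd_pair(1)[OF b] .
    have dB: "degree B \<le> n - 1"
    proof (cases "B = 0")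
      case False then show ?thesis using bnd_pair(2)[OF b] by simp
    qed simp
    obtain a where a: "A = smult a p" using orth_unique[OF g assms(3) dA oA] by blast
    have op1: "orth_poly w1 (n - 1) q" using assms(4) unfolding w1_def .
    obtain b where bb: "B = smult b q" using orth_unique[OF g1 op1 dB oB] by blast
    have "P - (smult [:a:] [:p:] + smult [:b:] [:0, q:]) = hyp_gen * Q"
      using PR a bb by simp
    then show "\<exists>a b::real. in_hyp_ideal (P - (smult [:a:] [:p:] + smult [:b:] [:0, q:]))"
      unfolding in_hyp_ideal_def by blast
  qed
  have c6: "hyp_ip w [:p:] [:p:] = 2 * hnorm w p"
    unfolding np hnorm_def by (simp add: power2_eq_square)
  have c7: "hyp_ip w [:0, q:] [:0, q:] = 2 * hnorm (\<lambda>t. (1 + t\<^sup>2) * w t) q"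
    unfolding nq hnorm_def w1_def by (simp add: power2_eq_square)
  show ?thesis using c1 c2 c3 c4 c5 c6 c7 by blast
qed

end
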